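(* Let $T$ be a tableau of shape $(2,1^{|T|-2})$ with $|T|\ge 2$ and distinct positive entries, and let $n$ be such that $T[n]$ (of shape $(n-|T|,2,1^{|T|-2})$, a near-hook) is a standard Young tableau. Suppose any two entries of $T$ differ by at least $2$, and $2$ and $n$ are not both entries of $T$. Then $\mathrm{pr}(T[n])$ divides $(|T|-1)(n-1)$.
   Context: Tableaux have distinct entries increasing along rows and down columns. For a tableau $T$ with distinct positive entries, $T[n]$ is obtained by placing above $T$ a new top row consisting of all elements of $\{1,\dots,n\}$ not in $T$, in increasing order. Promotion $\mathcal P$ of a tableau with distinct entries $i_1<\dots<i_m$: (1) remove the top-left entry, leaving an empty box; (2) while the empty box has a box to its right or below, slide into it the smaller of the entries of those boxes; (3) then replace each remaining entry $i_k$ by $i_{k-1}$; (4) place $i_m$ in the empty box. $\mathrm{pr}(T)$ is the least $t\ge1$ with $\mathcal P^t(T)=T$. *)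

theory Defs
  imports Main
begin

text \<open>A tableau is represented as a list of rows (top row first); row r, column c
  holds the entry T!r!c. Cells are (r,c) with r < length T and c < length (T!r).\<close>

type_synonym tableau = "nat list list"

definition entries :: "tableau \<Rightarrow> nat set" where
  "entries T = set (concat T)"

definition tsize :: "tableau \<Rightarrow> nat" where
  "tsize T = length (concat T)"

definition partition_shape :: "tableau \<Rightarrow> bool" where
  "partition_shape T \<longleftrightarrow> (\<forall>r < length T. 0 < length (T!r)) \<and>
     (\<forall>r. r + 1 < length T \<longrightarrow> length (T!(r+1)) \<le> length (T!r))"

definition is_tableau :: "tableau \<Rightarrow> bool" where
  "is_tableau T \<longleftrightarrow> partition_shape T \<and> distinct (concat T) \<and>
     (\<forall>r < length T. sorted_wrt (<) (T!r)) \<and>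
     (\<forall>r c. r + 1 < length T \<and> c < length (T!(r+1)) \<longrightarrow> T!r!c < T!(r+1)!c)"

definition is_SYT :: "nat \<Rightarrow> tableau \<Rightarrow> bool" where
  "is_SYT n T \<longleftrightarrow> is_tableau T \<and> entries T = {1..n}"

definition shape_2_1s :: "tableau \<Rightarrow> bool" where
  "shape_2_1s T \<longleftrightarrow> length T \<ge> 1 \<and> length (T!0) = 2 \<and>
     (\<forall>r. 1 \<le> r \<and> r < length T \<longrightarrow> length (T!r) = 1)"

definition extend :: "nat \<Rightarrow> tableau \<Rightarrow> tableau" where
  "extend n T = sorted_list_of_set ({1..n} - entries T) # T"

text \<open>Jeu de taquin slide of the empty box at (r,c); the value stored at the empty
  box is irrelevant. The fuel argument bounds the number of slides; it is always
  taken large enough (each slide increases r+c).\<close>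
fun slide :: "nat \<Rightarrow> tableau \<Rightarrow> nat \<times> nat \<Rightarrow> tableau \<times> (nat \<times> nat)" where
  "slide 0 T rc = (T, rc)"
| "slide (Suc k) T (r, c) =
     (let right = (c + 1 < length (T!r));
          down = (r + 1 < length T \<and> c < length (T!(r+1)))
      in if \<not> right \<and> \<not> down then (T, (r, c))
         else if right \<and> (\<not> down \<or> T!r!(c+1) < T!(r+1)!c)
         then slide k (T[r := (T!r)[c := T!r!(c+1)]]) (r, c + 1)
         else slide k (T[r := (T!r)[c := T!(r+1)!c]]) (r + 1, c))"

definition prev_entry :: "tableau \<Rightarrow> nat \<Rightarrow> nat" where
  "prev_entry T x = Max {y \<in> entries T. y < x}"

definition promotion :: "tableau \<Rightarrow> tableau" where
  "promotion T =
     (let (T', (r, c)) = slide (length T + tsize T) T (0, 0);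
          T'' = map (map (prev_entry T)) T'
      in T''[r := (T''!r)[c := Max (entries T)]])"

definition pr :: "tableau \<Rightarrow> nat" where
  "pr T = (LEAST t. t \<ge> 1 \<and> (promotion ^^ t) T = T)"

end

theory Submission
  imports Defs
begin


lemma sls_eq: "sorted_wrt (<) xs \<Longrightarrow> set xs = A \<Longrightarrow> sorted_list_of_set A = xs"
  by (metis List.finite_set sorted_list_of_set.strict_sorted_key_list_of_set strict_sorted_equal set_sorted_list_of_set)

lemma slide_row:
  "length P \<ge> length (R!0) \<or> R = [] \<Longrightarrow> k > length xs \<Longrightarrow>
   slide k ((P @ x # xs) # R) (0, length P) = ((P @ xs @ [last (x#xs)]) # R, (0, length P + length xs))"
proof (induction xs arbitrary: P x k)
  case Nil
  then obtain k' where "k = Suc k'" by (cases k) auto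
  then show ?case using Nil by auto
next
  case (Cons y ys)
  then obtain k' where k: "k = Suc k'" by (cases k) auto
  have "slide k ((P @ x # y # ys) # R) (0, length P) = slide k' (((P @ [y]) @ y # ys) # R) (0, length (P @ [y]))"
    using Cons.prems by (auto simp: k nth_append list_update_append)
  also have "\<dots> = (((P @ [y]) @ ys @ [last (y#ys)]) # R, (0, length (P@[y]) + length ys))"
    using Cons.prems by (intro Cons.IH) (auto simp: k)
  finally show ?case by simp
qed

lemma slide_col:
  "k > length xs \<Longrightarrow>
   slide k (A @ map (\<lambda>z. [z]) (x # xs)) (length A, 0) = (A @ map (\<lambda>z. [z]) (xs @ [last (x#xs)]), (length A + length xs, 0))"
proof (induction xs arbitrary: A x k)
  case Nil
  then obtain k' where "k = Suc k'" by (cases k) auto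
  then show ?case using Nil by (auto simp: nth_append)
next
  case (Cons y ys)
  then obtain k' where k: "k = Suc k'" by (cases k) auto
  have "slide k (A @ map (\<lambda>z. [z]) (x # y # ys)) (length A, 0) = slide k' ((A @ [[y]]) @ map (\<lambda>z. [z]) (y # ys)) (length (A @ [[y]]), 0)"
    using Cons.prems by (auto simp: k nth_append list_update_append)
  also have "\<dots> = ((A @ [[y]]) @ map (\<lambda>z. [z]) (ys @ [last (y#ys)]), (length (A @ [[y]]) + length ys, 0))"
    using Cons.prems by (intro Cons.IH) (auto simp: k)
  finally show ?case by simp
qed

lemma prev_entry_eq: "entries U = {1..n} \<Longrightarrow> 2 \<le> x \<Longrightarrow> x \<le> n \<Longrightarrow> prev_entry U x = x - 1"
proof -
  assume a: "entries U = {1..n}" "2 \<le> x" "x \<le> n"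
  have "{y \<in> entries U. y < x} = {1..x-1}" using a by auto
  then show ?thesis unfolding prev_entry_def using a by (simp add: Max_eq_iff)
qed

lemma prom_gen:
  assumes "entries U = {1..n}" "slide (length U + tsize U) U (0,0) = (T', (r, c))"
    and "set (concat T') \<subseteq> {2..n}" and "0 < n"
  shows "promotion U = (map (map (\<lambda>x. x - 1)) T')[r := ((map (map (\<lambda>x. x - 1)) T')!r)[c := n]]"
proof -
  have eqm: "map (map (prev_entry U)) T' = map (map (\<lambda>x. x - 1)) T'"
  proof (intro map_cong refl)
    fix r x assume "r \<in> set T'" "x \<in> set r"
    then have "x \<in> {2..n}" using assms(3) by auto
    then show "prev_entry U x = x - 1" using prev_entry_eq[OF assms(1)] by auto
  qed
  have mx: "Max (entries U) = n" using assms(1) assms(4)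
    by (auto simp: Max_eq_iff)
  have "promotion U = (let T'' = map (map (prev_entry U)) T' in T''[r := (T''!r)[c := Max (entries U)]])"
    unfolding promotion_def using assms(2) by simp
  then show ?thesis by (simp only: Let_def eqm mx)
qed

lemma promA:
  assumes U: "U = (1 # 2 # t2 # ts) # [c1, b] # map (\<lambda>z. [z]) cs" and e: "entries U = {1..n}"
    and "2 < c1" "t2 < b" "2 \<le> t2" "\<forall>x\<in>set ts. 2 \<le> x" "\<forall>x\<in>set cs. 2 \<le> x"
  shows "promotion U = (map (\<lambda>x. x - 1) (2 # t2 # ts) @ [n]) # [c1-1, b-1] # map (\<lambda>z. [z]) (map (\<lambda>x. x - 1) cs)"
proof -
  define k where "k = length U + tsize U - 2"
  have fu: "length U + tsize U = Suc (Suc k)" "k > length ts"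
    unfolding k_def by (auto simp: U tsize_def)
  have "slide (Suc (Suc k)) U (0,0) = slide k (([2, t2] @ t2 # ts) # [c1, b] # map (\<lambda>z. [z]) cs) (0, length [2,t2])"
    using assms by (simp add: U)
  also have "\<dots> = (([2, t2] @ ts @ [last (t2 # ts)]) # [c1, b] # map (\<lambda>z. [z]) cs, (0, length [2,t2] + length ts))"
    by (rule slide_row) (use fu in auto)
  finally have sl: "slide (length U + tsize U) U (0,0) = ((2 # t2 # ts @ [last (t2 # ts)]) # [c1, b] # map (\<lambda>z. [z]) cs, (0, 2 + length ts))"
    using fu by simp
  have ent: "set (concat U) = {1..n}" using e by (simp add: entries_def)
  have sub: "set (concat ((2 # t2 # ts @ [last (t2 # ts)]) # [c1, b] # map (\<lambda>z. [z]) cs)) \<subseteq> {2..n}"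
    using assms ent by (auto simp: U) 
  have n0: "0 < n" using ent by (auto simp: U)
  show ?thesis using prom_gen[OF e sl sub n0] by (simp add: list_update_append)
qed

lemma promB1:
  assumes U: "U = (1 # t1 # ts) # [2, b] # map (\<lambda>z. [z]) cs" and e: "entries U = {1..n}"
    and "2 < t1" "cs = [] \<or> b < hd cs" "2 \<le> b" "\<forall>x\<in>set ts. 2 \<le> x" "\<forall>x\<in>set cs. 2 \<le> x"
  shows "promotion U = (1 # map (\<lambda>x. x - 1) (t1 # ts)) # [b-1, n] # map (\<lambda>z. [z]) (map (\<lambda>x. x - 1) cs)"
proof -
  define k where "k = length U + tsize U - 3"
  have fu: "length U + tsize U = Suc (Suc (Suc k))"
    unfolding k_def by (auto simp: U tsize_def)
  have sl: "slide (length U + tsize U) U (0,0) = ((2 # t1 # ts) # [b, b] # map (\<lambda>z. [z]) cs, (1, 1))"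
    using assms unfolding fu by (cases cs) (auto simp: U)
  have ent: "set (concat U) = {1..n}" using e by (simp add: entries_def)
  have sub: "set (concat ((2 # t1 # ts) # [b, b] # map (\<lambda>z. [z]) cs)) \<subseteq> {2..n}"
    using assms ent by (auto simp: U) 
  have n0: "0 < n" using ent by (auto simp: U)
  show ?thesis using prom_gen[OF e sl sub n0] by simp
qed

lemma promB2:
  assumes U: "U = (1 # t1 # ts) # [2, b] # map (\<lambda>z. [z]) (c2 # cs)" and e: "entries U = {1..n}"
    and "2 < t1" "c2 < b" "2 \<le> b" "\<forall>x\<in>set ts. 2 \<le> x" "2 \<le> c2" "\<forall>x\<in>set cs. 2 \<le> x"
  shows "promotion U = (1 # map (\<lambda>x. x - 1) (t1 # ts)) # [c2-1, b-1] # map (\<lambda>z. [z]) (map (\<lambda>x. x - 1) cs @ [n])"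
proof -
  define k where "k = length U + tsize U - 2"
  have fu: "length U + tsize U = Suc (Suc k)" "k > length cs"
    unfolding k_def by (auto simp: U tsize_def)
  have "slide (Suc (Suc k)) U (0,0) = slide k ([2 # t1 # ts, [c2, b]] @ map (\<lambda>z. [z]) (c2 # cs)) (length [2 # t1 # ts, [c2, b]], 0)"
    using assms by (simp add: U)
  also have "\<dots> = ([2 # t1 # ts, [c2, b]] @ map (\<lambda>z. [z]) (cs @ [last (c2 # cs)]), (length [2 # t1 # ts, [c2, b]] + length cs, 0))"
    by (rule slide_col) (use fu in auto)
  finally have sl: "slide (length U + tsize U) U (0,0) = ((2 # t1 # ts) # [c2, b] # map (\<lambda>z. [z]) (cs @ [last (c2 # cs)]), (2 + length cs, 0))"
    using fu by simp
  have ent: "set (concat U) = {1..n}" using e by (simp add: entries_def)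
  have sub: "set (concat ((2 # t1 # ts) # [c2, b] # map (\<lambda>z. [z]) (cs @ [last (c2 # cs)]))) \<subseteq> {2..n}"
    using assms ent by (auto simp: U) 
  have n0: "0 < n" using ent by (auto simp: U)
  show ?thesis using prom_gen[OF e sl sub n0] by (simp add: list_update_append nth_append)
qed

definition sig :: "nat \<Rightarrow> nat \<Rightarrow> nat" where
  "sig n x = (if x = 2 then n else x - 1)"

definition mk :: "nat \<Rightarrow> nat set \<Rightarrow> nat \<Rightarrow> tableau" where
  "mk n S b = sorted_list_of_set ({1..n} - S) # [hd (sorted_list_of_set (S - {b})), b]
      # map (\<lambda>z. [z]) (tl (sorted_list_of_set (S - {b})))"

definition stp :: "nat \<Rightarrow> nat set \<times> nat \<Rightarrow> nat set \<times> nat" where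
  "stp n p = (sig n ` fst p, if 2 \<in> fst p \<and> snd p = Min (fst p - {2}) then n else snd p - 1)"

definition valid :: "nat \<Rightarrow> nat set \<Rightarrow> nat \<Rightarrow> bool" where
  "valid n S b \<longleftrightarrow> finite S \<and> S \<subseteq> {2..n} \<and> 2 \<le> card S \<and> b \<in> S \<and> Min S < b \<and>
     (\<forall>x\<in>S. \<forall>y\<in>S. x \<noteq> y \<longrightarrow> x + 2 \<le> y \<or> y + 2 \<le> x) \<and> \<not> (2 \<in> S \<and> n \<in> S)"

lemma sorted_map_dec: "sorted_wrt (<) xs \<Longrightarrow> \<forall>x\<in>set xs. 1 \<le> x \<Longrightarrow> sorted_wrt (<) (map (\<lambda>x. x - 1 :: nat) xs)"
  by (induction xs) auto

lemma sls_insert_min: "finite A \<Longrightarrow> \<forall>y\<in>A. x < y \<Longrightarrow> sorted_list_of_set (insert x A) = x # sorted_list_of_set A"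
  proof -
  assume a: "finite A" "\<forall>y\<in>A. x < y"
  then have "A - {x} = A" by auto
  then show ?thesis using a by (simp add: sorted_list_of_set_insert_remove insort_is_Cons less_imp_le)
qed

lemma sls_hd: "finite A \<Longrightarrow> sorted_list_of_set A = x # xs \<Longrightarrow> x = Min A"
proof -
  assume a: "finite A" "sorted_list_of_set A = x # xs"
  then have "set (x # xs) = A" "sorted_wrt (<) (x # xs)" by (metis set_sorted_list_of_set, metis a sorted_list_of_set.strict_sorted_key_list_of_set)
  then show ?thesis by (auto intro!: Min_eqI[symmetric] simp: less_imp_le)
qed

lemma sls_set: "finite A \<Longrightarrow> sorted_list_of_set A = xs \<Longrightarrow> set xs = A \<and> sorted_wrt (<) xs"
  by (metis set_sorted_list_of_set sorted_list_of_set.strict_sorted_key_list_of_set)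

lemma img_dec_compl: "(S::nat set) \<subseteq> {2..n} \<Longrightarrow> 2 \<le> n \<Longrightarrow> (\<lambda>x. x - 1) ` ({2..n} - S) \<union> {n} = {1..n} - (\<lambda>x. x - 1) ` S"
proof (rule set_eqI)
  fix y assume a: "S \<subseteq> {2..n}" "2 \<le> n"
  show "y \<in> (\<lambda>x. x - 1) ` ({2..n} - S) \<union> {n} \<longleftrightarrow> y \<in> {1..n} - (\<lambda>x. x - 1) ` S"
  proof
    assume "y \<in> (\<lambda>x. x - 1) ` ({2..n} - S) \<union> {n}"
    then consider "y = n" | x where "x \<in> {2..n}" "x \<notin> S" "y = x - 1" by auto
    then show "y \<in> {1..n} - (\<lambda>x. x - 1) ` S"
    proof cases
      case 1 then show ?thesis using a by force
    next
      case 2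
      have "\<forall>z\<in>S. z - 1 \<noteq> x - 1"
      proof
        fix z assume z: "z \<in> S"
        then have "2 \<le> z" using a by auto
        moreover have "z \<noteq> x" using 2 z by auto
        ultimately show "z - 1 \<noteq> x - 1" using 2 by auto
      qed
      then show ?thesis using 2 by auto
    qed
  next
    assume y: "y \<in> {1..n} - (\<lambda>x. x - 1) ` S"
    show "y \<in> (\<lambda>x. x - 1) ` ({2..n} - S) \<union> {n}"
    proof (cases "y = n")
      case False
      have "y + 1 \<notin> S"
      proof
        assume "y + 1 \<in> S"
        then have "(y + 1) - 1 \<in> (\<lambda>x. x - 1) ` S" by (rule imageI)
        then show False using y by simp
      qed
      moreover have "y + 1 \<in> {2..n}" using y False by auto
      ultimately have "y + 1 \<in> {2..n} - S" by blast
      then show ?thesis by (metis UnI1 diff_add_inverse2 imageI)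
    qed simp
  qed
qed

lemma dec_inj: "S \<subseteq> {2..n} \<Longrightarrow> inj_on (\<lambda>x. x - 1 :: nat) S"
  by (rule inj_onI) force



lemma stepA:
  assumes v: "valid n S b" and n2: "2 \<notin> S"
  shows "promotion (mk n S b) = mk n ((\<lambda>x. x - 1) ` S) (b - 1)"
proof -
  have fS: "finite S" and Sn: "S \<subseteq> {2..n}" and cS: "2 \<le> card S" and bS: "b \<in> S" and mb: "Min S < b"
    and sep: "\<forall>x\<in>S. \<forall>y\<in>S. x \<noteq> y \<longrightarrow> x + 2 \<le> y \<or> y + 2 \<le> x" using v by (auto simp: valid_def)
  define c1 where "c1 = Min S"
  have "S \<noteq> {}" using cS by auto
  then have c1S: "c1 \<in> S" by (simp add: c1_def Min_in fS)
  have c1b: "c1 < b" using mb c1_def by simp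
  have c13: "3 \<le> c1"
  proof -
    have "2 \<le> c1" "c1 \<noteq> 2" using c1S Sn n2 by auto
    then show ?thesis by linarith
  qed
  have c1min: "\<forall>x\<in>S. c1 \<le> x" using fS c1_def by simp
  define R where "R = S - {b} - {c1}"
  have eqR: "S - {b} = insert c1 R" unfolding R_def using c1S c1b by auto
  have ltR: "\<forall>y\<in>R. c1 < y"
  proof
    fix y assume "y \<in> R"
    then have "c1 \<le> y" "y \<noteq> c1" using c1min unfolding R_def by auto
    then show "c1 < y" by simp
  qed
  have finR: "finite R" unfolding R_def using fS by simp
  have col: "sorted_list_of_set (S - {b}) = c1 # sorted_list_of_set R"
    unfolding eqR by (rule sls_insert_min[OF finR ltR])
  define cs where "cs = sorted_list_of_set R"
  note col = col[folded cs_def]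
  have cset: "set (c1 # cs) = S - {b}" "sorted_wrt (<) (c1 # cs)" using sls_set[OF _ col] fS by auto
  have c1p: "c1 + 1 \<notin> S"
  proof
    assume "c1 + 1 \<in> S"
    moreover have "c1 \<noteq> c1 + 1" by simp
    ultimately have "c1 + 2 \<le> c1 + 1 \<or> c1 + 1 + 2 \<le> c1" using sep[rule_format, OF c1S] by blast
    then show False by simp
  qed
  have "c1 + 1 \<noteq> b" using c1p bS by auto
  then have c1pb: "c1 + 1 < b" using c1b by simp
  obtain t2 ts where tsl: "sorted_list_of_set ({3..n} - S) = t2 # ts"
  proof -
    have "c1 + 1 \<in> {3..n} - S" using c1pb c1p Sn bS c13 by auto
    then have "{3..n} - S \<noteq> {}" by blast
    then have "sorted_list_of_set ({3..n} - S) \<noteq> []"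
      using sorted_list_of_set_eq_Nil_iff[of "{3..n} - S"] by simp
    then show ?thesis using that by (cases "sorted_list_of_set ({3..n} - S)") auto
  qed
  have tset: "set (t2 # ts) = {3..n} - S" "sorted_wrt (<) (t2 # ts)" using sls_set[OF _ tsl] by auto
  have t2r: "t2 \<in> {3..n}" "\<forall>x\<in>set ts. x \<in> {3..n}" using tset(1) by auto
  have t2b: "t2 < b"
  proof -
    have "b \<le> n" using bS Sn by auto
    then have "c1 + 1 \<in> {3..n} - S" using c1p c1pb c13 by auto
    then have "c1 + 1 \<in> set (t2 # ts)" using tset(1) by simp
    then have "t2 \<le> c1 + 1" using tset(2) by auto
    then show ?thesis using c1pb by simp
  qed
  have top: "sorted_list_of_set ({1..n} - S) = 1 # 2 # t2 # ts"
  proof -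
    have "{1..n} - S = insert 1 (insert 2 ({3..n} - S))" using n2 Sn c1pb bS by auto
    moreover have "sorted_list_of_set (insert 2 ({3..n} - S)) = 2 # t2 # ts"
      using sls_insert_min[of "{3..n} - S" 2] tsl by auto
    ultimately show ?thesis using sls_insert_min[of "insert 2 ({3..n} - S)" 1] by auto
  qed
  have U: "mk n S b = (1 # 2 # t2 # ts) # [c1, b] # map (\<lambda>z. [z]) cs"
    unfolding mk_def top col by simp
  have e: "entries (mk n S b) = {1..n}"
  proof -
    have "entries (mk n S b) = {1,2} \<union> set (t2 # ts) \<union> set (c1 # cs) \<union> {b}"
      unfolding U entries_def by auto
    also have "\<dots> = {1,2} \<union> ({3..n} - S) \<union> (S - {b}) \<union> {b}" using tset(1) cset(1) by simp
    also have "\<dots> = {1..n}" using bS Sn c1pb n2 by auto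
    finally show ?thesis .
  qed
  have pr: "promotion (mk n S b) = (map (\<lambda>x. x - 1) (2 # t2 # ts) @ [n]) # [c1-1, b-1] # map (\<lambda>z. [z]) (map (\<lambda>x. x - 1) cs)"
    by (rule promA[OF U e]) (use c13 t2b t2r cset Sn in auto)
  define S' where "S' = (\<lambda>x. x - 1) ` S"
  have top': "sorted_list_of_set ({1..n} - S') = map (\<lambda>x. x - 1) (2 # t2 # ts) @ [n]"
  proof (rule sls_eq)
    show "sorted_wrt (<) (map (\<lambda>x. x - 1) (2 # t2 # ts) @ [n])"
    proof -
      have "sorted_wrt (<) (2 # t2 # ts)" using tset t2r by auto
      then have "sorted_wrt (<) (map (\<lambda>x. x - 1) (2 # t2 # ts))"
      proof (rule sorted_map_dec)
        show "\<forall>x\<in>set (2 # t2 # ts). 1 \<le> x" using t2r by auto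
      qed
      moreover have "\<forall>x\<in>set (map (\<lambda>x. x - 1) (2 # t2 # ts)). x < n" using t2r by auto
      ultimately show ?thesis by (simp add: sorted_wrt_append del: list.map)
    qed
    show "set (map (\<lambda>x. x - 1) (2 # t2 # ts) @ [n]) = {1..n} - S'"
    proof -
      have "set (2 # t2 # ts) = {2..n} - S" using tset(1) n2 c1pb bS Sn by auto
      then have "set (map (\<lambda>x. x - 1) (2 # t2 # ts) @ [n]) = (\<lambda>x. x - 1) ` ({2..n} - S) \<union> {n}"
        by (simp only: set_append set_map) simp
      also have "\<dots> = {1..n} - S'" unfolding S'_def
        by (rule img_dec_compl) (use Sn bS in auto)
      finally show ?thesis .
    qed
  qed
  have col': "sorted_list_of_set (S' - {b - 1}) = map (\<lambda>x. x - 1) (c1 # cs)"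
  proof (rule sls_eq)
    show "sorted_wrt (<) (map (\<lambda>x. x - 1) (c1 # cs))"
    proof (rule sorted_map_dec)
      show "sorted_wrt (<) (c1 # cs)" by (rule cset(2))
      have "set (c1 # cs) \<subseteq> {2..n}" using cset(1) Sn by auto
      then show "\<forall>x\<in>set (c1 # cs). 1 \<le> x" by auto
    qed
    show "set (map (\<lambda>x. x - 1) (c1 # cs)) = S' - {b - 1}"
    proof -
      have "set (map (\<lambda>x. x - 1) (c1 # cs)) = (\<lambda>x. x - 1) ` (S - {b})" by (simp only: set_map cset(1))
      also have "\<dots> = S' - {b - 1}" unfolding S'_def
        using inj_on_image_set_diff[OF dec_inj[OF Sn], of S "{b}"] bS by auto
      finally show ?thesis .
    qed
  qed
  have "mk n S' (b - 1) = (map (\<lambda>x. x - 1) (2 # t2 # ts) @ [n]) # [c1-1, b-1] # map (\<lambda>z. [z]) (map (\<lambda>x. x - 1) cs)"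
    unfolding mk_def top' col' by simp
  then show ?thesis using pr S'_def by simp
qed

lemma stepB:
  assumes v: "valid n S b" and t2: "2 \<in> S"
  shows "promotion (mk n S b) = mk n (sig n ` S) (if b = Min (S - {2}) then n else b - 1)"
proof -
  have fS: "finite S" and Sn: "S \<subseteq> {2..n}" and cS: "2 \<le> card S" and bS: "b \<in> S" and mb: "Min S < b"
    and sep: "\<forall>x\<in>S. \<forall>y\<in>S. x \<noteq> y \<longrightarrow> x + 2 \<le> y \<or> y + 2 \<le> x" and nS: "n \<notin> S"
    using v t2 by (simp_all add: valid_def)
  have m2: "Min S = 2" by (rule Min_eqI[OF fS]) (use Sn t2 in auto)
  have b2: "2 < b" using mb m2 by simp
  have bn: "b \<le> n" using bS Sn by auto
  have n3: "3 \<le> n" using b2 bn by simp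
  have t3: "3 \<notin> S"
  proof
    assume "3 \<in> S"
    moreover have "(2::nat) \<noteq> 3" by simp
    ultimately have "(2::nat) + 2 \<le> 3 \<or> 3 + 2 \<le> (2::nat)" using sep[rule_format, OF t2] by blast
    then show False by simp
  qed
  have Sge: "\<forall>x\<in>S - {2}. 4 \<le> x \<and> x < n"
  proof
    fix x assume x: "x \<in> S - {2}"
    then have "2 \<le> x" "x \<noteq> 2" "x \<noteq> 3" "x \<le> n" "x \<noteq> n" using Sn t3 nS by auto
    then show "4 \<le> x \<and> x < n" by simp
  qed
  define R where "R = S - {b} - {2}"
  have eqR: "S - {b} = insert 2 R" unfolding R_def using t2 b2 by auto
  have ltR: "\<forall>y\<in>R. 2 < y"
  proof
    fix y assume "y \<in> R"
    then have "y \<in> S - {2}" unfolding R_def by auto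
    then have "4 \<le> y" using bspec[OF Sge] by simp
    then show "2 < y" by simp
  qed
  have finR: "finite R" unfolding R_def using fS by simp
  have col: "sorted_list_of_set (S - {b}) = 2 # sorted_list_of_set R"
    unfolding eqR by (rule sls_insert_min[OF finR ltR])
  define cs where "cs = sorted_list_of_set R"
  note col = col[folded cs_def]
  have cset: "set (2 # cs) = S - {b}" "sorted_wrt (<) (2 # cs)" using sls_set[OF _ col] fS by auto
  have "2 \<notin> set cs" using cset(2) by auto
  then have "set cs = set (2 # cs) - {2}" by simp
  also have "\<dots> = S - {b} - {2}" by (simp only: cset(1))
  also have "\<dots> = S - {2} - {b}" by blast
  finally have csS: "set cs = S - {2} - {b}" .
  have csr: "\<forall>x\<in>set cs. 4 \<le> x \<and> x < n"
  proof
    fix x assume "x \<in> set cs"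
    then have "x \<in> S - {2}" using csS by simp
    then show "4 \<le> x \<and> x < n" using bspec[OF Sge] by simp
  qed
  obtain t1 ts where tsl: "sorted_list_of_set ({2..n} - S) = t1 # ts"
  proof -
    have "n \<in> {2..n} - S" using nS n3 by auto
    then have "{2..n} - S \<noteq> {}" by blast
    then have "sorted_list_of_set ({2..n} - S) \<noteq> []"
      using sorted_list_of_set_eq_Nil_iff[of "{2..n} - S"] by simp
    then show ?thesis using that by (cases "sorted_list_of_set ({2..n} - S)") auto
  qed
  have tset: "set (t1 # ts) = {2..n} - S" "sorted_wrt (<) (t1 # ts)" using sls_set[OF _ tsl] by auto
  have "set (t1 # ts) \<subseteq> {3..n}"
  proof
    fix x assume "x \<in> set (t1 # ts)"
    then have "x \<in> {2..n} - S" unfolding tset(1) .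
    then have "x \<in> {2..n}" "x \<noteq> 2" using t2 by auto
    then show "x \<in> {3..n}" by simp
  qed
  then have t1r: "t1 \<in> {3..n}" "\<forall>x\<in>set ts. x \<in> {3..n}" by auto
  have top: "sorted_list_of_set ({1..n} - S) = 1 # t1 # ts"
  proof -
    have "{1..n} - S = insert 1 ({2..n} - S)" using Sn n3 by auto
    moreover have "\<forall>y\<in>{2..n} - S. 1 < y" by auto
    ultimately show ?thesis using sls_insert_min[of "{2..n} - S" 1] tsl by auto
  qed
  have e: "entries (mk n S b) = {1..n}"
  proof -
    have "entries (mk n S b) = {1} \<union> set (t1 # ts) \<union> set (2 # cs) \<union> {b}"
      unfolding mk_def top col entries_def by auto
    also have "\<dots> = {1} \<union> ({2..n} - S) \<union> (S - {b}) \<union> {b}" using tset(1) cset(1) by simp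
    also have "\<dots> = {1..n}" using bS Sn n3 by auto
    finally show ?thesis .
  qed
  have U0: "mk n S b = (1 # t1 # ts) # [2, b] # map (\<lambda>z. [z]) cs"
    unfolding mk_def top col by simp
  define f :: "nat \<Rightarrow> nat" where "f = (\<lambda>x. x - 1)"
  have sigS: "sig n ` S = insert n (f ` (S - {2}))"
  proof -
    have "sig n ` S = sig n ` (insert 2 (S - {2}))" by (simp only: insert_Diff[OF t2])
    then have "sig n ` S = insert (sig n 2) (sig n ` (S - {2}))" by (simp only: image_insert)
    moreover have "sig n ` (S - {2}) = f ` (S - {2})" unfolding sig_def f_def by (rule image_cong) auto
    ultimately show ?thesis by (simp add: sig_def)
  qed
  have nf: "n \<notin> f ` (S - {2})"
  proof
    assume "n \<in> f ` (S - {2})"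
    then obtain x where x: "x \<in> S - {2}" "n = f x" by blast
    then have "x < n" using Sge by blast
    then show False using x(2) unfolding f_def by simp
  qed
  have finj: "inj_on f (S - {2})" unfolding f_def by (rule dec_inj[of _ n]) (use Sn in auto)
  have top': "sorted_list_of_set ({1..n} - sig n ` S) = 1 # map f (t1 # ts)"
  proof (rule sls_eq)
    have "sorted_wrt (<) (map f (t1 # ts))" unfolding f_def
    proof (rule sorted_map_dec)
      show "sorted_wrt (<) (t1 # ts)" by (rule tset(2))
      show "\<forall>x\<in>set (t1 # ts). 1 \<le> x" using t1r by auto
    qed
    moreover have "\<forall>x\<in>set (map f (t1 # ts)). 1 < x" using t1r unfolding f_def by auto
    ultimately show "sorted_wrt (<) (1 # map f (t1 # ts))" by simp
    have A: "f ` ({2..n} - (S - {2})) \<union> {n} = {1..n} - f ` (S - {2})"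
      unfolding f_def by (rule img_dec_compl) (use Sn n3 in auto)
    have B: "{2..n} - (S - {2}) = insert 2 ({2..n} - S)" using t2 n3 by auto
    have C: "n \<notin> f ` ({2..n} - S)"
    proof
      assume "n \<in> f ` ({2..n} - S)"
      then obtain x where x: "x \<in> {2..n} - S" "n = f x" by blast
      then have "2 \<le> x" "x \<le> n" by auto
      then show False using x(2) unfolding f_def by simp
    qed
    have "set (1 # map f (t1 # ts)) = insert 1 (f ` set (t1 # ts))" by simp
    also have "\<dots> = insert 1 (f ` ({2..n} - S))" by (simp only: tset(1))
    also have "\<dots> = insert 1 (f ` ({2..n} - S)) - {n}" using C n3 by auto
    also have "\<dots> = (f ` ({2..n} - (S - {2})) \<union> {n}) - {n}" unfolding B by (simp add: f_def)
    also have "\<dots> = {1..n} - sig n ` S" unfolding A sigS by auto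
    finally show "set (1 # map f (t1 # ts)) = {1..n} - sig n ` S" .
  qed
  show ?thesis
  proof (cases "b = Min (S - {2})")
    case True
    have bmin: "\<forall>x\<in>set cs. b < x"
    proof
      fix x assume x: "x \<in> set cs"
      then have "x \<in> S - {2}" "x \<noteq> b" using csS by simp_all
      moreover have "finite (S - {2})" using fS by simp
      ultimately have "b \<le> x" unfolding True by simp
      then show "b < x" using \<open>x \<noteq> b\<close> by simp
    qed
    have hd: "cs = [] \<or> b < hd cs" using bmin by (cases cs) auto
    have pr: "promotion (mk n S b) = (1 # map f (t1 # ts)) # [b-1, n] # map (\<lambda>z. [z]) (map f cs)"
      unfolding f_def by (rule promB1[OF U0 e]) (use t1r hd b2 csr in auto)
    have col': "sorted_list_of_set (sig n ` S - {n}) = map f (b # cs)"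
    proof (rule sls_eq)
      show "sorted_wrt (<) (map f (b # cs))" unfolding f_def
      proof (rule sorted_map_dec)
        show "sorted_wrt (<) (b # cs)" using bmin cset(2) by simp
        show "\<forall>x\<in>set (b # cs). 1 \<le> x" using b2 csr by auto
      qed
      have "set (map f (b # cs)) = f ` (S - {2})" using csS bS b2 by auto
      also have "\<dots> = sig n ` S - {n}" unfolding sigS using nf by auto
      finally show "set (map f (b # cs)) = sig n ` S - {n}" .
    qed
    have "mk n (sig n ` S) n = (1 # map f (t1 # ts)) # [b-1, n] # map (\<lambda>z. [z]) (map f cs)"
      unfolding mk_def top' col' by (simp add: f_def)
    then show ?thesis using pr True by simp
  next
    case False
    define c2 where "c2 = Min (S - {2})"
    have fin2: "finite (S - {2})" using fS by simp
    have ne2: "S - {2} \<noteq> {}" using bS b2 by auto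
    have c2in: "c2 \<in> S - {2}" unfolding c2_def using fin2 ne2 by (rule Min_in)
    have "b \<in> S - {2}" using bS b2 by simp
    then have "c2 \<le> b" unfolding c2_def using fin2 by simp
    moreover have "c2 \<noteq> b" using False unfolding c2_def by simp
    ultimately have c2b: "c2 < b" by simp
    have c2cs: "c2 \<in> set cs" using c2in c2b csS by auto
    obtain cs' where cs: "cs = c2 # cs'"
    proof (cases cs)
      case Nil then show ?thesis using c2cs by simp
    next
      case (Cons h cs')
      have "h \<in> set cs" using Cons by simp
      then have "h \<in> S - {2}" unfolding csS by simp
      then have "c2 \<le> h" unfolding c2_def using fin2 by simp
      moreover have "h \<le> c2" using c2cs cset(2) Cons by auto
      ultimately have "h = c2" by simp
      then show ?thesis using that Cons by simp
    qed
    have pr: "promotion (mk n S b) = (1 # map f (t1 # ts)) # [c2-1, b-1] # map (\<lambda>z. [z]) (map f cs' @ [n])"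
      unfolding f_def by (rule promB2[OF U0[unfolded cs] e]) (use t1r c2b b2 csr cs in auto)
    have col': "sorted_list_of_set (sig n ` S - {b - 1}) = map f (c2 # cs') @ [n]"
    proof (rule sls_eq)
      have "sorted_wrt (<) (map f (c2 # cs'))" unfolding f_def
      proof (rule sorted_map_dec)
        show "sorted_wrt (<) (c2 # cs')" using cset(2) cs by simp
        show "\<forall>x\<in>set (c2 # cs'). 1 \<le> x" using csr cs by auto
      qed
      moreover have "\<forall>x\<in>set (map f (c2 # cs')). x < n" using csr cs unfolding f_def by auto
      ultimately show "sorted_wrt (<) (map f (c2 # cs') @ [n])" by (simp add: sorted_wrt_append del: list.map)
      have "f ` (S - {2} - {b}) = f ` (S - {2}) - f ` {b}"
        by (rule inj_on_image_set_diff[OF finj]) (use bS b2 in auto)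
      then have D: "f ` (S - {2} - {b}) = f ` (S - {2}) - {b - 1}" unfolding f_def by simp
      have "set (map f (c2 # cs') @ [n]) = insert n (f ` (S - {2} - {b}))" using csS cs by auto
      also have "\<dots> = sig n ` S - {b - 1}" unfolding sigS D using bn b2 by auto
      finally show "set (map f (c2 # cs') @ [n]) = sig n ` S - {b - 1}" .
    qed
    have "mk n (sig n ` S) (b - 1) = (1 # map f (t1 # ts)) # [c2-1, b-1] # map (\<lambda>z. [z]) (map f cs' @ [n])"
      unfolding mk_def top' col' by (simp add: f_def)
    then show ?thesis using pr False by simp
  qed
qed



lemma valid_D:
  assumes "valid n S b"
  shows "finite S" "S \<subseteq> {2..n}" "2 \<le> card S" "b \<in> S" "Min S < b"
    "\<And>x y. x \<in> S \<Longrightarrow> y \<in> S \<Longrightarrow> x \<noteq> y \<Longrightarrow> x + 2 \<le> y \<or> y + 2 \<le> x"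
    "\<not> (2 \<in> S \<and> n \<in> S)"
  using assms unfolding valid_def by blast+

lemma valid_n4: assumes "valid n S b" shows "4 \<le> n"
proof -
  note D = valid_D[OF assms]
  have "Min S \<in> S" using D(1,4) by (intro Min_in) auto
  then have "Min S + 2 \<le> b \<or> b + 2 \<le> Min S" using D(4,5) D(6)[of "Min S" b] by simp
  then have "Min S + 2 \<le> b" using D(5) by simp
  moreover have "2 \<le> Min S" "b \<le> n" using \<open>Min S \<in> S\<close> D(2,4) by auto
  ultimately show ?thesis by simp
qed

lemma step_prom:
  assumes v: "valid n S b"
  shows "promotion (mk n S b) = mk n (fst (stp n (S, b))) (snd (stp n (S, b)))"
proof (cases "2 \<in> S")
  case True
  then show ?thesis using stepB[OF v True] by (simp add: stp_def)
next
  case False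
  have "sig n ` S = (\<lambda>x. x - 1) ` S" unfolding sig_def by (rule image_cong) (use False in auto)
  then show ?thesis using stepA[OF v False] False by (simp add: stp_def)
qed

lemma sig_range: "x \<in> {2..n} \<Longrightarrow> 3 \<le> n \<Longrightarrow> sig n x \<in> {2..n}"
  unfolding sig_def by auto

lemma sig_inj: "inj_on (sig n) {2..n}"
proof (rule inj_onI)
  fix x y assume "x \<in> {2..n}" "y \<in> {2..n}" "sig n x = sig n y"
  then show "x = y" unfolding sig_def by (auto split: if_splits)
qed

lemma valid_stp:
  assumes v: "valid n S b"
  shows "valid n (fst (stp n (S, b))) (snd (stp n (S, b)))"
proof -
  note D = valid_D[OF v]
  have n4: "4 \<le> n" by (rule valid_n4[OF v])
  define S' where "S' = sig n ` S"
  define b' where "b' = (if 2 \<in> S \<and> b = Min (S - {2}) then n else b - 1)"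
  have st: "stp n (S, b) = (S', b')" unfolding stp_def S'_def b'_def by simp
  have injS: "inj_on (sig n) S" using sig_inj D(2) by (rule inj_on_subset)
  have f': "finite S'" unfolding S'_def using D(1) by simp
  have sub': "S' \<subseteq> {2..n}" unfolding S'_def using D(2) n4 sig_range by fastforce
  have card': "card S' = card S" unfolding S'_def using injS by (simp add: card_image)
  have mS: "Min S \<in> S" using D(1,3) by (intro Min_in) auto
  have b2: "b \<noteq> 2" using D(5) mS D(2) by fastforce
  have b'S: "b' \<in> S'"
  proof (cases "2 \<in> S \<and> b = Min (S - {2})")
    case True
    then have "sig n 2 \<in> S'" unfolding S'_def by blast
    then show ?thesis using True unfolding b'_def sig_def by simp
  next
    case False
    then have "sig n b \<in> S'" unfolding S'_def using D(4) by blast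
    moreover have "b' = b - 1" unfolding b'_def by (rule if_not_P[OF False])
    ultimately show ?thesis using b2 unfolding sig_def by simp
  qed
  have ex: "\<exists>y\<in>S'. y < b'"
  proof (cases "2 \<in> S \<and> b = Min (S - {2})")
    case True
    have "card S' \<ge> 2" using card' D(3) by simp
    then obtain y where y: "y \<in> S'" "y \<noteq> n"
      by (metis card_le_Suc0_iff_eq f' not_less_eq_eq numeral_2_eq_2)
    then have "y < n" using sub' by fastforce
    then show ?thesis using y True unfolding b'_def by auto
  next
    case False
    then have b'd: "b' = b - 1" unfolding b'_def by (rule if_not_P)
    show ?thesis
    proof (cases "2 \<in> S")
      case True
      define c where "c = Min (S - {2})"
      have fin2: "finite (S - {2})" using D(1) by simp
      have "b \<in> S - {2}" using D(4) b2 by simp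
      then have cb: "c \<le> b" unfolding c_def using fin2 by simp
      have cin: "c \<in> S - {2}" unfolding c_def using fin2 \<open>b \<in> S - {2}\<close> by (intro Min_in) auto
      have "c \<noteq> b" using False True unfolding c_def by simp
      then have "c < b" using cb by simp
      moreover have "c \<noteq> 2" "c \<ge> 2" using cin D(2) by auto
      moreover have "sig n c \<in> S'" unfolding S'_def using cin by blast
      ultimately show ?thesis unfolding b'd sig_def by (intro bexI[of _ "c - 1"]) auto
    next
      case F2: False
      have "Min S \<noteq> 2" "Min S \<ge> 2" using F2 mS D(2) by auto
      moreover have "sig n (Min S) \<in> S'" unfolding S'_def using mS by blast
      ultimately show ?thesis unfolding b'd sig_def using D(5) by (intro bexI[of _ "Min S - 1"]) auto
    qed
  qed
  have mb': "Min S' < b'" using ex f' by (meson Min_le order.strict_trans1)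
  have sep': "x + 2 \<le> y \<or> y + 2 \<le> x" if xy: "x \<in> S'" "y \<in> S'" "x \<noteq> y" for x y
  proof -
    obtain x0 where x0: "x0 \<in> S" "x = sig n x0" using xy(1) unfolding S'_def by blast
    obtain y0 where y0: "y0 \<in> S" "y = sig n y0" using xy(2) unfolding S'_def by blast
    have ne: "x0 \<noteq> y0" using xy(3) x0 y0 by auto
    have sp: "x0 + 2 \<le> y0 \<or> y0 + 2 \<le> x0" by (rule D(6)[OF x0(1) y0(1) ne])
    have r: "2 \<le> x0" "x0 \<le> n" "2 \<le> y0" "y0 \<le> n" using x0(1) y0(1) D(2) by auto
    show ?thesis
    proof (cases "x0 = 2")
      case True
      then have "n \<notin> S" using D(7) x0(1) by blast
      then have "y0 \<noteq> n" using y0(1) by auto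
      then show ?thesis using sp r ne True x0(2) y0(2) unfolding sig_def by auto
    next
      case False
      show ?thesis
      proof (cases "y0 = 2")
        case True
        then have "n \<notin> S" using D(7) y0(1) by blast
        then have "x0 \<noteq> n" using x0(1) by auto
        then show ?thesis using sp r ne True x0(2) y0(2) unfolding sig_def by auto
      next
        case F2: False
        then show ?thesis using sp r ne False x0(2) y0(2) unfolding sig_def by auto
      qed
    qed
  qed
  have nn': "\<not> (2 \<in> S' \<and> n \<in> S')"
  proof
    assume a: "2 \<in> S' \<and> n \<in> S'"
    then obtain x0 where x0: "x0 \<in> S" "2 = sig n x0" unfolding S'_def by blast
    then have "x0 = 3" unfolding sig_def using n4 by (auto split: if_splits)
    obtain y0 where y0: "y0 \<in> S" "n = sig n y0" using a unfolding S'_def by blast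
    have "y0 \<le> n" "2 \<le> y0" using y0(1) D(2) by auto
    then have "y0 = 2" using y0(2) unfolding sig_def by (auto split: if_splits)
    have "(3::nat) + 2 \<le> 2 \<or> (2::nat) + 2 \<le> 3" using D(6)[of 3 2] x0(1) y0(1) \<open>x0 = 3\<close> \<open>y0 = 2\<close> by simp
    then show False by simp
  qed
  show ?thesis unfolding st fst_conv snd_conv valid_def
    using f' sub' card' D(3) b'S mb' sep' nn' by simp
qed

definition rk :: "nat set \<Rightarrow> nat \<Rightarrow> nat" where
  "rk S b = card {x \<in> S. x < b}"

definition FS :: "nat set \<Rightarrow> int" where
  "FS S = (\<Sum>x\<in>S. int x)"

lemma rk_range:
  assumes v: "valid n S b" shows "1 \<le> rk S b" "rk S b \<le> card S - 1"
proof -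
  note D = valid_D[OF v]
  have mS: "Min S \<in> S" using D(1,3) by (intro Min_in) auto
  have "Min S \<in> {x \<in> S. x < b}" using mS D(5) by simp
  moreover have "finite {x \<in> S. x < b}" using D(1) by simp
  ultimately show "1 \<le> rk S b" unfolding rk_def by (metis One_nat_def Suc_leI card_gt_0_iff empty_iff)
  have "{x \<in> S. x < b} \<subseteq> S - {b}" by auto
  then have "rk S b \<le> card (S - {b})" unfolding rk_def using D(1) by (intro card_mono) auto
  then show "rk S b \<le> card S - 1" using D(4) D(1) by (simp add: card_Diff_singleton)
qed

lemma rk_inj:
  assumes "finite S" "b1 \<in> S" "b2 \<in> S" "rk S b1 = rk S b2" shows "b1 = b2"
proof (rule ccontr)
  assume ne: "b1 \<noteq> b2"
  have lt: "rk S x < rk S y" if "x \<in> S" "y \<in> S" "x < y" for x y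
  proof -
    have "{z \<in> S. z < x} \<subset> {z \<in> S. z < y}" using that by auto
    then show ?thesis unfolding rk_def using assms(1) by (intro psubset_card_mono) auto
  qed
  show False
  proof (cases "b1 < b2")
    case True then show False using lt[OF assms(2,3)] assms(4) by simp
  next
    case False then have "b2 < b1" using ne by simp
    then show False using lt[OF assms(3,2)] assms(4) by simp
  qed
qed

lemma rk_step:
  assumes v: "valid n S b"
  shows "int (rk (fst (stp n (S, b))) (snd (stp n (S, b)))) = int (rk S b) - (if 2 \<in> S then 1 else 0)
    \<or> int (rk (fst (stp n (S, b))) (snd (stp n (S, b)))) = int (rk S b) - (if 2 \<in> S then 1 else 0) + int (card S - 1)"
proof -
  note D = valid_D[OF v]
  have n4: "4 \<le> n" by (rule valid_n4[OF v])
  have injS: "inj_on (sig n) S" using sig_inj D(2) by (rule inj_on_subset)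
  have mS: "Min S \<in> S" using D(1,3) by (intro Min_in) auto
  have b2: "b \<noteq> 2" "2 \<le> b" "b \<le> n" using D(5) mS D(2) D(4) by fastforce+
  show ?thesis
  proof (cases "2 \<in> S")
    case False
    have st: "stp n (S, b) = (sig n ` S, b - 1)" unfolding stp_def using False by simp
    have "{y \<in> sig n ` S. y < b - 1} = sig n ` {x \<in> S. x < b}"
    proof (rule set_eqI)
      fix y
      show "y \<in> {y \<in> sig n ` S. y < b - 1} \<longleftrightarrow> y \<in> sig n ` {x \<in> S. x < b}"
      proof
        assume "y \<in> {y \<in> sig n ` S. y < b - 1}"
        then obtain x where x: "x \<in> S" "y = sig n x" "y < b - 1" by auto
        have "x \<noteq> 2" "2 \<le> x" using x(1) False D(2) by auto
        then have "x < b" using x unfolding sig_def by simp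
        then show "y \<in> sig n ` {x \<in> S. x < b}" using x by auto
      next
        assume "y \<in> sig n ` {x \<in> S. x < b}"
        then obtain x where x: "x \<in> S" "y = sig n x" "x < b" by auto
        have "x \<noteq> 2" "2 \<le> x" using x(1) False D(2) by auto
        then have "y < b - 1" using x unfolding sig_def by simp
        then show "y \<in> {y \<in> sig n ` S. y < b - 1}" using x by auto
      qed
    qed
    moreover have "card (sig n ` {x \<in> S. x < b}) = card {x \<in> S. x < b}"
      using inj_on_subset[OF injS] by (intro card_image) auto
    ultimately show ?thesis unfolding st rk_def using False by simp
  next
    case True
    have n3: "n \<notin> S" using D(7) True by blast
    show ?thesis
    proof (cases "b = Min (S - {2})")
      case bm: True
      have st: "stp n (S, b) = (sig n ` S, n)" unfolding stp_def using True bm by simp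
      have "{x \<in> S. x < b} = {2}"
      proof (rule set_eqI)
        fix x
        show "x \<in> {x \<in> S. x < b} \<longleftrightarrow> x \<in> {2}"
        proof
          assume x: "x \<in> {x \<in> S. x < b}"
          show "x \<in> {2}"
          proof (rule ccontr)
            assume "x \<notin> {2}"
            then have "x \<in> S - {2}" using x by simp
            then have "b \<le> x" unfolding bm using D(1) by simp
            then show False using x by simp
          qed
        qed (use True b2 in auto)
      qed
      then have r1: "rk S b = 1" unfolding rk_def by simp
      have "{y \<in> sig n ` S. y < n} = sig n ` S - {n}" using D(2) n4 sig_range by fastforce
      moreover have "n \<in> sig n ` S" using True unfolding sig_def by force
      moreover have "card (sig n ` S) = card S" using injS by (simp add: card_image)
      ultimately have "rk (sig n ` S) n = card S - 1" unfolding rk_def using D(1) by (simp add: card_Diff_singleton)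
      then show ?thesis unfolding st using r1 True D(3) by simp
    next
      case bm: False
      have st: "stp n (S, b) = (sig n ` S, b - 1)" unfolding stp_def using bm by simp
      have "{y \<in> sig n ` S. y < b - 1} = sig n ` ({x \<in> S. x < b} - {2})"
      proof (rule set_eqI)
        fix y
        show "y \<in> {y \<in> sig n ` S. y < b - 1} \<longleftrightarrow> y \<in> sig n ` ({x \<in> S. x < b} - {2})"
        proof
          assume "y \<in> {y \<in> sig n ` S. y < b - 1}"
          then obtain x where x: "x \<in> S" "y = sig n x" "y < b - 1" by auto
          have "x \<noteq> 2"
          proof
            assume "x = 2" then have "y = n" using x unfolding sig_def by simp
            then show False using x(3) b2 by simp
          qed
          moreover have "2 \<le> x" using x(1) D(2) by auto
          ultimately have "x < b" using x unfolding sig_def by simp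
          then show "y \<in> sig n ` ({x \<in> S. x < b} - {2})" using x \<open>x \<noteq> 2\<close> by auto
        next
          assume "y \<in> sig n ` ({x \<in> S. x < b} - {2})"
          then obtain x where x: "x \<in> S" "y = sig n x" "x < b" "x \<noteq> 2" by auto
          have "2 \<le> x" using x(1) D(2) by auto
          then have "y < b - 1" using x unfolding sig_def by simp
          then show "y \<in> {y \<in> sig n ` S. y < b - 1}" using x by auto
        qed
      qed
      moreover have "card (sig n ` ({x \<in> S. x < b} - {2})) = card ({x \<in> S. x < b} - {2})"
        using inj_on_subset[OF injS, of "{x \<in> S. x < b} - {2}"] by (intro card_image) auto
      moreover have "card ({x \<in> S. x < b} - {2}) = card {x \<in> S. x < b} - 1"
        using True b2 D(1) by (subst card_Diff_singleton) auto
      moreover have "1 \<le> card {x \<in> S. x < b}" using rk_range[OF v] unfolding rk_def by simp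
      ultimately show ?thesis unfolding st rk_def using True by simp
    qed
  qed
qed

lemma FS_step:
  assumes v: "valid n S b"
  shows "FS (sig n ` S) = FS S - int (card S) + (if 2 \<in> S then int n - 1 else 0)"
proof -
  note D = valid_D[OF v]
  have injS: "inj_on (sig n) S" using sig_inj D(2) by (rule inj_on_subset)
  have "FS (sig n ` S) = (\<Sum>x\<in>S. int (sig n x))" unfolding FS_def using injS by (simp add: sum.reindex)
  also have "\<dots> = (\<Sum>x\<in>S. (int x - 1) + (if x = 2 then int n - 1 else 0))"
  proof (rule sum.cong)
    fix x assume "x \<in> S"
    then have "2 \<le> x" using D(2) by auto
    then show "int (sig n x) = (int x - 1) + (if x = 2 then int n - 1 else 0)" unfolding sig_def by auto
  qed simp
  also have "\<dots> = (\<Sum>x\<in>S. int x) - int (card S) + (\<Sum>x\<in>S. (if x = 2 then int n - 1 else 0))"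
    by (simp add: sum.distrib sum_subtractf)
  also have "(\<Sum>x\<in>S. (if x = 2 then int n - 1 else 0)) = (if 2 \<in> S then int n - 1 else 0)"
    using D(1) by (simp add: sum.delta')
  finally show ?thesis unfolding FS_def .
qed

lemma sig_pow:
  assumes "3 \<le> n" "x \<in> {2..n}"
  shows "(sig n ^^ t) x = 2 + (x - 2 + t * (n - 2)) mod (n - 1)"
proof (induction t)
  case 0
  have "x - 2 < n - 1" using assms by auto
  then show ?case using assms by (simp, arith)
next
  case (Suc t)
  define y where "y = (x - 2 + t * (n - 2)) mod (n - 1)"
  have yl: "y < n - 1" unfolding y_def using assms by simp
  have "x - 2 + Suc t * (n - 2) = x - 2 + t * (n - 2) + (n - 2)" by simp
  then have "(x - 2 + Suc t * (n - 2)) mod (n - 1) = (x - 2 + t * (n - 2) + (n - 2)) mod (n - 1)" by (simp only:)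
  also have "\<dots> = (y + (n - 2)) mod (n - 1)" unfolding y_def by (simp add: mod_add_left_eq)
  finally have e: "(x - 2 + Suc t * (n - 2)) mod (n - 1) = (y + (n - 2)) mod (n - 1)" .
  show ?case
  proof (cases "y = 0")
    case True
    have "(y + (n - 2)) mod (n - 1) = n - 2" using True assms by simp
    then show ?thesis using Suc e True unfolding y_def[symmetric] sig_def using assms by simp
  next
    case False
    have "y + (n - 2) = (y - 1) + 1 * (n - 1)" using False assms by simp
    then have "(y + (n - 2)) mod (n - 1) = (y - 1) mod (n - 1)" by (metis mod_mult_self1)
    also have "\<dots> = y - 1" using yl by simp
    finally show ?thesis using Suc e False unfolding y_def[symmetric] sig_def using assms by simp
  qed
qed

lemma sig_pow_period:
  assumes "3 \<le> n" "x \<in> {2..n}"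
  shows "(sig n ^^ (k * (n - 1))) x = x"
proof -
  have "(x - 2 + k * (n - 1) * (n - 2)) mod (n - 1) = (x - 2) mod (n - 1)"
    by (metis mod_mult_self2 mult.commute mult.left_commute)
  also have "\<dots> = x - 2" using assms by (intro mod_less) auto
  finally show ?thesis using sig_pow[OF assms, of "k * (n - 1)"] assms by (simp, arith)
qed

lemma orbit:
  assumes v: "valid n S b"
  shows "valid n (fst ((stp n ^^ t) (S, b))) (snd ((stp n ^^ t) (S, b)))
    \<and> fst ((stp n ^^ t) (S, b)) = (sig n ^^ t) ` S
    \<and> card (fst ((stp n ^^ t) (S, b))) = card S
    \<and> (promotion ^^ t) (mk n S b) = mk n (fst ((stp n ^^ t) (S, b))) (snd ((stp n ^^ t) (S, b)))
    \<and> int ((n - 1) * (card S - 1)) dvd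
        ((int (n - 1) * int (rk (fst ((stp n ^^ t) (S, b))) (snd ((stp n ^^ t) (S, b))))
          + FS (fst ((stp n ^^ t) (S, b))) + int (card S) * int t)
        - (int (n - 1) * int (rk S b) + FS S))"
proof (induction t)
  case 0
  then show ?case using v by simp
next
  case (Suc t)
  define p where "p = (stp n ^^ t) (S, b)"
  define S1 where "S1 = fst p"
  define b1 where "b1 = snd p"
  have pe: "p = (S1, b1)" unfolding S1_def b1_def by simp
  have IH: "valid n S1 b1" "S1 = (sig n ^^ t) ` S" "card S1 = card S"
    "(promotion ^^ t) (mk n S b) = mk n S1 b1"
    "int ((n - 1) * (card S - 1)) dvd ((int (n - 1) * int (rk S1 b1) + FS S1 + int (card S) * int t)
        - (int (n - 1) * int (rk S b) + FS S))"
    using Suc.IH unfolding p_def[symmetric] S1_def[symmetric] b1_def[symmetric] by blast+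
  have nxt: "(stp n ^^ Suc t) (S, b) = stp n (S1, b1)" using pe p_def by simp
  define S2 where "S2 = fst (stp n (S1, b1))"
  define b2 where "b2 = snd (stp n (S1, b1))"
  have S2e: "S2 = sig n ` S1" unfolding S2_def stp_def by simp
  have v2: "valid n S2 b2" unfolding S2_def b2_def by (rule valid_stp[OF IH(1)])
  have S2p: "S2 = (sig n ^^ Suc t) ` S" unfolding S2e IH(2) by (simp add: image_comp)
  note D1 = valid_D[OF IH(1)]
  have injS: "inj_on (sig n) S1" using sig_inj D1(2) by (rule inj_on_subset)
  have c2: "card S2 = card S" unfolding S2e using injS IH(3) by (simp add: card_image)
  have pr2: "(promotion ^^ Suc t) (mk n S b) = mk n S2 b2"
    using IH(4) step_prom[OF IH(1)] unfolding S2_def b2_def by simp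
  define m where "m = card S"
  define d :: int where "d = (if 2 \<in> S1 then 1 else 0)"
  have fs: "FS S2 = FS S1 - int m + d * (int n - 1)"
    unfolding S2e m_def d_def using FS_step[OF IH(1)] IH(3) by simp
  have rs: "int (rk S2 b2) = int (rk S1 b1) - d \<or> int (rk S2 b2) = int (rk S1 b1) - d + int (m - 1)"
    using rk_step[OF IH(1)] IH(3) unfolding S2_def b2_def d_def m_def by simp
  have n4: "4 \<le> n" by (rule valid_n4[OF IH(1)])
  have m2: "2 \<le> m" using D1(3) IH(3) unfolding m_def by simp
  define M where "M = int ((n - 1) * (card S - 1))"
  have Mi: "M = (int n - 1) * (int m - 1)" unfolding M_def m_def using n4 m2 m_def by (simp add: of_nat_diff)
  have Mstep: "M dvd ((int (n - 1) * int (rk S2 b2) + FS S2 + int m * int (Suc t))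
          - (int (n - 1) * int (rk S1 b1) + FS S1 + int m * int t))"
  proof -
    have e: "(int (n - 1) * int (rk S2 b2) + FS S2 + int m * int (Suc t))
          - (int (n - 1) * int (rk S1 b1) + FS S1 + int m * int t)
          = (int n - 1) * (int (rk S2 b2) - int (rk S1 b1) + d)"
      using n4 fs by (simp add: of_nat_diff algebra_simps)
    from rs show ?thesis
    proof
      assume "int (rk S2 b2) = int (rk S1 b1) - d"
      then show ?thesis unfolding e by simp
    next
      assume "int (rk S2 b2) = int (rk S1 b1) - d + int (m - 1)"
      then have "int (rk S2 b2) - int (rk S1 b1) + d = int m - 1" using m2 by (simp add: of_nat_diff)
      then show ?thesis unfolding e Mi by simp
    qed
  qed
  then have "M dvd ((int (n - 1) * int (rk S2 b2) + FS S2 + int m * int (Suc t))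
        - (int (n - 1) * int (rk S b) + FS S))"
  proof -
    have IH5: "M dvd ((int (n - 1) * int (rk S1 b1) + FS S1 + int m * int t)
        - (int (n - 1) * int (rk S b) + FS S))" using IH(5) unfolding M_def m_def .
    show ?thesis using dvd_add[OF Mstep IH5] by (simp add: algebra_simps)
  qed
  then show ?case unfolding nxt S2_def[symmetric] b2_def[symmetric] M_def m_def
    using v2 S2p c2 pr2 by simp
qed

lemma period:
  assumes v: "valid n S b"
  shows "(promotion ^^ ((card S - 1) * (n - 1))) (mk n S b) = mk n S b"
proof -
  define N where "N = (card S - 1) * (n - 1)"
  define S1 where "S1 = fst ((stp n ^^ N) (S, b))"
  define b1 where "b1 = snd ((stp n ^^ N) (S, b))"
  note O = orbit[OF v, of N, folded S1_def b1_def]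
  note D = valid_D[OF v]
  have n4: "4 \<le> n" by (rule valid_n4[OF v])
  have S1S: "S1 = S"
  proof -
    have "S1 = (sig n ^^ N) ` S" using O by blast
    also have "\<dots> = S"
    proof (rule image_cong[where g = id, simplified])
      fix x assume "x \<in> S"
      then have "x \<in> {2..n}" using D(2) by auto
      then show "(sig n ^^ N) x = x" unfolding N_def using sig_pow_period n4 by simp
    qed simp
    finally show ?thesis .
  qed
  have v1: "valid n S b1" using O S1S by simp
  define m where "m = card S"
  have m2: "2 \<le> m" using D(3) m_def by simp
  have dv: "int ((n - 1) * (m - 1)) dvd (int (n - 1) * int (rk S b1) + FS S + int m * int N - (int (n - 1) * int (rk S b) + FS S))"
    using O S1S unfolding m_def by simp
  have dm: "int ((n - 1) * (m - 1)) dvd int m * int N" unfolding N_def m_def by simp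
  have "int ((n - 1) * (m - 1)) dvd (int (n - 1) * (int (rk S b1) - int (rk S b)))"
    using dvd_diff[OF dv dm] by (simp add: algebra_simps)
  then have "int (n - 1) * int (m - 1) dvd int (n - 1) * (int (rk S b1) - int (rk S b))" by simp
  then have dd: "int (m - 1) dvd (int (rk S b1) - int (rk S b))" using n4 by (subst (asm) dvd_times_left_cancel_iff) auto
  have r1: "1 \<le> rk S b1" "rk S b1 \<le> m - 1" using rk_range[OF v1] m_def by auto
  have r0: "1 \<le> rk S b" "rk S b \<le> m - 1" using rk_range[OF v] m_def by auto
  have "rk S b1 = rk S b"
  proof (rule ccontr)
    assume ne: "rk S b1 \<noteq> rk S b"
    then have "\<bar>int (m - 1)\<bar> \<le> \<bar>int (rk S b1) - int (rk S b)\<bar>" using dd by (intro dvd_imp_le_int) auto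
    then show False using r1 r0 m2 by linarith
  qed
  then have "b1 = b" using rk_inj[OF D(1) _ D(4)] valid_D(4)[OF v1] by blast
  then show ?thesis using O S1S unfolding N_def by simp
qed

lemma funpow_mult_fix: "(f ^^ p) x = x \<Longrightarrow> (f ^^ (k * p)) x = x"
proof (induction k)
  case (Suc k)
  have "(f ^^ (Suc k * p)) x = (f ^^ p) ((f ^^ (k * p)) x)" by (simp add: funpow_add)
  then show ?case using Suc by simp
qed simp

lemma least_period_dvd:
  assumes "0 < N" "(f ^^ N) x = x"
  shows "(LEAST t. t \<ge> 1 \<and> (f ^^ t) x = x) dvd N"
proof -
  define p where "p = (LEAST t. t \<ge> 1 \<and> (f ^^ t) x = x)"
  have P: "p \<ge> 1 \<and> (f ^^ p) x = x" unfolding p_def by (rule LeastI[of _ N]) (use assms in auto)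
  have "(f ^^ N) x = (f ^^ (N mod p)) ((f ^^ ((N div p) * p)) x)"
    by (metis div_mult_mod_eq funpow_add add.commute comp_apply)
  then have r: "(f ^^ (N mod p)) x = x" using funpow_mult_fix[where f=f and p=p and x=x and k="N div p"] P assms(2) by simp
  have "N mod p = 0"
  proof (rule ccontr)
    assume "N mod p \<noteq> 0"
    then have "N mod p \<ge> 1 \<and> (f ^^ (N mod p)) x = x" using r by simp
    then have "p \<le> N mod p" unfolding p_def by (rule Least_le)
    moreover have "N mod p < p" using P by simp
    ultimately show False by simp
  qed
  then show ?thesis unfolding p_def[symmetric] by auto
qed

lemma len2: "length xs = 2 \<Longrightarrow> xs = [xs!0, xs!1]"
  by (cases xs; cases "tl xs") auto

lemma len1: "length xs = 1 \<Longrightarrow> xs = [xs!0]"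
  by (cases xs) auto

lemma init:
  assumes tab: "is_tableau T"
    and sh: "shape_2_1s T"
    and ts: "tsize T \<ge> 2"
    and pos: "\<forall>x \<in> entries T. x > 0"
    and syt: "is_SYT n (extend n T)"
    and sep: "\<forall>x \<in> entries T. \<forall>y \<in> entries T. x \<noteq> y \<longrightarrow> x + 2 \<le> y \<or> y + 2 \<le> x"
    and n2: "\<not> (2 \<in> entries T \<and> n \<in> entries T)"
  shows "extend n T = mk n (entries T) (T!0!1) \<and> valid n (entries T) (T!0!1) \<and> tsize T = card (entries T)"
proof -
  define a where "a = T!0!0"
  define b where "b = T!0!1"
  define col where "col = map (\<lambda>r. r!0) T"
  define cs where "cs = tl col"
  have lT: "length T \<ge> 1" and l0: "length (T!0) = 2" and l1: "\<And>r. 1 \<le> r \<Longrightarrow> r < length T \<Longrightarrow> length (T!r) = 1"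
    using sh unfolding shape_2_1s_def by auto
  have T0: "T!0 = [a, b]" unfolding a_def b_def using len2[OF l0] .
  have Teq: "T = [a, b] # map (\<lambda>z. [z]) cs"
  proof (rule nth_equalityI)
    show "length T = length ([a, b] # map (\<lambda>z. [z]) cs)" unfolding cs_def col_def using lT by simp
  next
    fix i assume "i < length T"
    then show "T ! i = ([a, b] # map (\<lambda>z. [z]) cs) ! i"
    proof (cases i)
      case 0 then show ?thesis using T0 by simp
    next
      case (Suc j)
      then have "length (T!i) = 1" using l1 \<open>i < length T\<close> by simp
      then have "T!i = [T!i!0]" by (rule len1)
      moreover have "cs ! j = T!i!0" unfolding cs_def col_def using Suc \<open>i < length T\<close> by (simp add: nth_tl)
      moreover have "j < length cs" unfolding cs_def col_def using Suc \<open>i < length T\<close> by simp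
      ultimately show ?thesis using Suc by simp
    qed
  qed
  have colT: "col = a # cs" unfolding cs_def col_def a_def using lT by (cases T) auto
  have ct: "concat T = a # b # cs" by (subst Teq) simp
  have dist: "distinct (concat T)" using tab unfolding is_tableau_def by simp
  have ent: "entries T = insert b (set col)" unfolding entries_def ct colT by auto
  have bcol: "b \<notin> set col" using dist unfolding ct colT by simp
  have colc: "\<And>r c. r + 1 < length T \<Longrightarrow> c < length (T!(r+1)) \<Longrightarrow> T!r!c < T!(r+1)!c"
    using tab unfolding is_tableau_def by blast
  have rows: "\<And>r. r < length T \<Longrightarrow> sorted_wrt (<) (T!r)"
    using tab unfolding is_tableau_def by blast
  have sorted_col: "sorted_wrt (<) col"
  proof (subst sorted_wrt_iff_nth_Suc_transp)
    show "transp ((<) :: nat \<Rightarrow> nat \<Rightarrow> bool)" by (rule transpI) simp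
    show "\<forall>i. Suc i < length col \<longrightarrow> col ! i < col ! Suc i"
    proof (intro allI impI)
      fix i assume i: "Suc i < length col"
      have "length (T!(i+1)) = 1" using l1 i unfolding col_def by simp
      moreover have "i + 1 < length T" using i unfolding col_def by simp
      ultimately have "T!i!0 < T!(i+1)!0" using colc by simp
      then show "col ! i < col ! Suc i" using i unfolding col_def by simp
    qed
  qed
  have "sorted_wrt (<) (T!0)" using lT by (intro rows) auto
  then have ab: "a < b" using T0 by simp
  define S where "S = entries T"
  define top where "top = sorted_list_of_set ({1..n} - S)"
  have ext: "extend n T = top # T" unfolding extend_def top_def S_def ..
  have tab2: "is_tableau (top # T)" using syt unfolding is_SYT_def ext by simp
  have e2: "entries (top # T) = {1..n}" using syt unfolding is_SYT_def ext by simp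
  have ps: "\<forall>r. r + 1 < length (top # T) \<longrightarrow> length ((top # T)!(r+1)) \<le> length ((top # T)!r)"
    using tab2 unfolding is_tableau_def partition_shape_def by blast
  have "length ((top # T)!1) \<le> length ((top # T)!0)"
  proof -
    have "T \<noteq> []" using lT by auto
    then show ?thesis using ps[rule_format, of 0] by simp
  qed
  then have ltop: "2 \<le> length top" using l0 by simp
  have "(top # T)!0!0 < (top # T)!1!0"
  proof -
    have "\<forall>r c. r + 1 < length (top # T) \<and> c < length ((top # T)!(r+1)) \<longrightarrow> (top # T)!r!c < (top # T)!(r+1)!c"
      using tab2 unfolding is_tableau_def by blast
    then have "0 + 1 < length (top # T) \<and> 0 < length ((top # T)!(0+1)) \<longrightarrow> (top # T)!0!0 < (top # T)!(0+1)!0"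
      by blast
    moreover have "0 + 1 < length (top # T)" "0 < length ((top # T)!(0+1))" using lT l0 by auto
    ultimately show ?thesis by simp
  qed
  then have t0a: "top!0 < a" unfolding a_def by simp
  have "top!0 \<in> set top" using ltop by (intro nth_mem) auto
  then have "top!0 \<in> entries (top # T)" unfolding entries_def by simp
  then have "1 \<le> top!0" using e2 by simp
  then have a2: "2 \<le> a" using t0a by simp
  have amin: "\<forall>x\<in>S. a \<le> x"
  proof
    fix x assume "x \<in> S"
    then have "x = b \<or> x \<in> set col" using ent S_def by simp
    then show "a \<le> x"
    proof
      assume "x \<in> set col"
      then show "a \<le> x" using sorted_col colT by (auto simp: less_imp_le)
    qed (use ab in simp)
  qed
  have aS: "a \<in> S" using ent colT S_def by simp
  have Sn: "S \<subseteq> {2..n}"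
  proof
    fix x assume x: "x \<in> S"
    then have "x \<in> entries (top # T)" unfolding S_def entries_def by simp
    then have "x \<le> n" using e2 by simp
    moreover have "2 \<le> x" using amin x a2 by force
    ultimately show "x \<in> {2..n}" by simp
  qed
  have finS: "finite S" unfolding S_def entries_def by simp
  have minS: "Min S = a" using finS aS amin by (intro Min_eqI) auto
  have colS: "S - {b} = set col" using ent bcol S_def by auto
  have slsc: "sorted_list_of_set (S - {b}) = col" using sorted_col colS by (intro sls_eq) auto
  have mkE: "mk n S b = extend n T"
    unfolding mk_def slsc ext top_def[symmetric] using colT Teq by simp
  have tsz: "tsize T = card S" unfolding tsize_def S_def entries_def using distinct_card[OF dist] by simp
  have sepS: "\<forall>x\<in>S. \<forall>y\<in>S. x \<noteq> y \<longrightarrow> x + 2 \<le> y \<or> y + 2 \<le> x" using sep unfolding S_def .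
  have n2S: "\<not> (2 \<in> S \<and> n \<in> S)" using n2 unfolding S_def .
  have bS: "b \<in> S" using ent S_def by simp
  have "valid n S b" unfolding valid_def
  proof (intro conjI)
    show "2 \<le> card S" using ts tsz by simp
    show "Min S < b" using minS ab by simp
    show "finite S" by (rule finS)
    show "S \<subseteq> {2..n}" by (rule Sn)
    show "b \<in> S" by (rule bS)
    show "\<forall>x\<in>S. \<forall>y\<in>S. x \<noteq> y \<longrightarrow> x + 2 \<le> y \<or> y + 2 \<le> x" by (rule sepS)
    show "\<not> (2 \<in> S \<and> n \<in> S)" by (rule n2S)
  qed
  then show ?thesis using mkE tsz unfolding S_def b_def by simp
qed

theorem proposition6p1:
  fixes T :: tableau and n :: nat
  assumes "is_tableau T"
    and "shape_2_1s T"
    and "tsize T \<ge> 2"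
    and "\<forall>x \<in> entries T. x > 0"
    and "is_SYT n (extend n T)"
    and "\<forall>x \<in> entries T. \<forall>y \<in> entries T. x \<noteq> y \<longrightarrow> x + 2 \<le> y \<or> y + 2 \<le> x"
    and "\<not> (2 \<in> entries T \<and> n \<in> entries T)"
  shows "pr (extend n T) dvd (tsize T - 1) * (n - 1)"
proof -
  note I = init[OF assms]
  define S where "S = entries T"
  define b where "b = T!0!1"
  have v: "valid n S b" and E: "extend n T = mk n S b" and c: "tsize T = card S"
    using I unfolding S_def b_def by auto
  have n4: "4 \<le> n" by (rule valid_n4[OF v])
  have c2: "2 \<le> card S" using valid_D(3)[OF v] .
  have P: "(promotion ^^ ((card S - 1) * (n - 1))) (extend n T) = extend n T"
    unfolding E by (rule period[OF v])
  have pos: "0 < (card S - 1) * (n - 1)" using n4 c2 by simp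
  show ?thesis unfolding pr_def c by (rule least_period_dvd[OF pos P])
qed

end
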